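(* Let $q$, $\Delta$, $A_E\in\mathbb{R}_{\ge0}^{q\times q}$ and $A_V\in\mathbb{R}_{\ge0}^q$ be constants. Then there is a constant $b=b_{q,\Delta,A_E,A_V}>0$ such that for every graph $G$ of maximum degree $\Delta$, every permissive spin system $(G,q,A_E,A_V)$ is $b$-marginally bounded.
   Context: A spin system $(G,q,A_E,A_V)$ on $G=(V,E)$ assigns to $\sigma\in[q]^V$ the weight $w(\sigma)=\prod_{\{u,v\}\in E}A_E(\sigma(u),\sigma(v))\prod_{v\in V}A_V(\sigma(v))$, with Gibbs distribution $\mu\propto w$. For $\Lambda\subseteq V$ and any (possibly infeasible) $\sigma\in[q]^\Lambda$, let $w^\sigma(\tau)=\mathbf 1[\tau|_\Lambda=\sigma]\prod_{v\notin\Lambda}A_V(\tau(v))\prod_{\{u,v\}\in E,u\notin\Lambda,v\in\Lambda}A_E(\tau(u),\sigma(v))\prod_{\{u,v\}\in E,u,v\notin\Lambda}A_E(\tau(u),\tau(v))$ for $\tau\in[q]^V$, $Z^\sigma=\sum_\tau w^\sigma(\tau)$ and $\mu^\sigma=w^\sigma/Z^\sigma$. The system is permissive if $Z^\sigma>0$ for all $\Lambda\subseteq V$ and $\sigma\in[q]^\Lambda$. Let $\mu^\sigma_v$ be the marginal of $\mu^\sigma$ at $v$. The system is $b$-marginally bounded if for every $\Lambda\subseteq V$, $\sigma\in[q]^\Lambda$, $v\notin\Lambda$ and $c\in[q]$ with $\mu^\sigma_v(c)>0$, one has $\mu^\sigma_v(c)\ge b$. *)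

theory Defs
  imports Complex_Main "HOL-Library.FuncSet"
begin

text \<open>Graphs: a finite vertex set V (vertices are naturals) and a set E of edges,
  each unordered edge {u,v} being represented by exactly one orientation (u,v).
  Spins are 0..q-1 (i.e. [q] shifted). The edge interaction of an edge (u,v) is
  A_E(spin u, spin v); for symmetric A_E the orientation is irrelevant.\<close>

definition simple_graph :: "nat set \<Rightarrow> (nat \<times> nat) set \<Rightarrow> bool" where
  "simple_graph V E \<longleftrightarrow> finite V \<and> E \<subseteq> V \<times> V \<and>
     (\<forall>u v. (u, v) \<in> E \<longrightarrow> u \<noteq> v \<and> (v, u) \<notin> E)"

definition degree :: "(nat \<times> nat) set \<Rightarrow> nat \<Rightarrow> nat" where
  "degree E v = card {u. (u, v) \<in> E \<or> (v, u) \<in> E}"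

definition max_degree_le :: "nat set \<Rightarrow> (nat \<times> nat) set \<Rightarrow> nat \<Rightarrow> bool" where
  "max_degree_le V E \<Delta> \<longleftrightarrow> (\<forall>v\<in>V. degree E v \<le> \<Delta>)"

definition configs :: "nat \<Rightarrow> nat set \<Rightarrow> (nat \<Rightarrow> nat) set" where
  "configs q S = PiE S (\<lambda>_. {..<q})"

definition wcond ::
  "nat set \<Rightarrow> (nat \<times> nat) set \<Rightarrow> (nat \<Rightarrow> nat \<Rightarrow> real) \<Rightarrow> (nat \<Rightarrow> real)
     \<Rightarrow> nat set \<Rightarrow> (nat \<Rightarrow> nat) \<Rightarrow> (nat \<Rightarrow> nat) \<Rightarrow> real" where
  "wcond V E AE AV \<Lambda> \<sigma> \<tau> =
     (if (\<forall>v\<in>\<Lambda>. \<tau> v = \<sigma> v) then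
        (\<Prod>v\<in>V - \<Lambda>. AV (\<tau> v)) *
        (\<Prod>e\<in>E. if fst e \<in> \<Lambda> \<and> snd e \<in> \<Lambda> then 1 else AE (\<tau> (fst e)) (\<tau> (snd e)))
      else 0)"

definition Zcond ::
  "nat \<Rightarrow> nat set \<Rightarrow> (nat \<times> nat) set \<Rightarrow> (nat \<Rightarrow> nat \<Rightarrow> real) \<Rightarrow> (nat \<Rightarrow> real)
     \<Rightarrow> nat set \<Rightarrow> (nat \<Rightarrow> nat) \<Rightarrow> real" where
  "Zcond q V E AE AV \<Lambda> \<sigma> = (\<Sum>\<tau>\<in>configs q V. wcond V E AE AV \<Lambda> \<sigma> \<tau>)"

definition marginal ::
  "nat \<Rightarrow> nat set \<Rightarrow> (nat \<times> nat) set \<Rightarrow> (nat \<Rightarrow> nat \<Rightarrow> real) \<Rightarrow> (nat \<Rightarrow> real)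
     \<Rightarrow> nat set \<Rightarrow> (nat \<Rightarrow> nat) \<Rightarrow> nat \<Rightarrow> nat \<Rightarrow> real" where
  "marginal q V E AE AV \<Lambda> \<sigma> v c =
     (\<Sum>\<tau>\<in>{\<tau>\<in>configs q V. \<tau> v = c}. wcond V E AE AV \<Lambda> \<sigma> \<tau>) / Zcond q V E AE AV \<Lambda> \<sigma>"

definition permissive ::
  "nat \<Rightarrow> nat set \<Rightarrow> (nat \<times> nat) set \<Rightarrow> (nat \<Rightarrow> nat \<Rightarrow> real) \<Rightarrow> (nat \<Rightarrow> real) \<Rightarrow> bool" where
  "permissive q V E AE AV \<longleftrightarrow>
     (\<forall>\<Lambda> \<sigma>. \<Lambda> \<subseteq> V \<longrightarrow> \<sigma> \<in> configs q \<Lambda> \<longrightarrow> Zcond q V E AE AV \<Lambda> \<sigma> > 0)"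

definition marginally_bounded ::
  "real \<Rightarrow> nat \<Rightarrow> nat set \<Rightarrow> (nat \<times> nat) set \<Rightarrow> (nat \<Rightarrow> nat \<Rightarrow> real) \<Rightarrow> (nat \<Rightarrow> real) \<Rightarrow> bool" where
  "marginally_bounded b q V E AE AV \<longleftrightarrow>
     (\<forall>\<Lambda> \<sigma> v c. \<Lambda> \<subseteq> V \<longrightarrow> \<sigma> \<in> configs q \<Lambda> \<longrightarrow> v \<in> V - \<Lambda> \<longrightarrow> c < q \<longrightarrow>
        marginal q V E AE AV \<Lambda> \<sigma> v c > 0 \<longrightarrow> marginal q V E AE AV \<Lambda> \<sigma> v c \<ge> b)"

end

theory Submission
  imports Defs
begin

lemma key:
  fixes q \<Delta> :: nat and AE :: "nat \<Rightarrow> nat \<Rightarrow> real" and AV :: "nat \<Rightarrow> real" and m M :: real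
  assumes AEnn: "\<forall>i<q. \<forall>j<q. AE i j \<ge> 0"
    and AVnn: "\<forall>i<q. AV i \<ge> 0"
    and AEm: "\<forall>i<q. \<forall>j<q. AE i j \<noteq> 0 \<longrightarrow> m \<le> AE i j"
    and AVm: "\<forall>i<q. AV i \<noteq> 0 \<longrightarrow> m \<le> AV i"
    and AEM: "\<forall>i<q. \<forall>j<q. AE i j \<le> M"
    and AVM: "\<forall>i<q. AV i \<le> M"
    and m0: "0 < m" and m1: "m \<le> 1" and M1: "1 \<le> M"
    and sg: "simple_graph V E" and md: "max_degree_le V E \<Delta>" and perm: "permissive q V E AE AV"
    and LV: "\<Lambda> \<subseteq> V" and sig: "\<sigma> \<in> configs q \<Lambda>" and vV: "v \<in> V - \<Lambda>" and cq: "c < q"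
    and mpos: "marginal q V E AE AV \<Lambda> \<sigma> v c > 0"
  shows "Zcond q V E AE AV \<Lambda> \<sigma> \<le> (M ^ ((\<Delta>+1) + 2*\<Delta>*(\<Delta>+1)) / m ^ ((\<Delta>+1) + 2*\<Delta>*(\<Delta>+1))) * real ((q+1)^(\<Delta>+1))
     * (\<Sum>\<tau>\<in>{\<tau>\<in>configs q V. \<tau> v = c}. wcond V E AE AV \<Lambda> \<sigma> \<tau>)"
proof -
  define K where "K = (\<Delta>+1) + 2*\<Delta>*(\<Delta>+1)"
  define U where "U = {u \<in> V - \<Lambda>. (u,v) \<in> E \<or> (v,u) \<in> E}"
  define S where "S = insert v U"
  define ES where "ES = {e\<in>E. fst e \<in> S \<or> snd e \<in> S}"
  define C where "C = configs q V"
  define A where "A = {\<tau>\<in>C. \<tau> v = c}"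
  define w where "w = wcond V E AE AV \<Lambda> \<sigma>"
  define h where "h \<tau> e = (if fst e \<in> \<Lambda> \<and> snd e \<in> \<Lambda> then 1 else AE (\<tau> (fst e)) (\<tau> (snd e)))" for \<tau> :: "nat \<Rightarrow> nat" and e :: "nat \<times> nat"
  define PS where "PS \<tau> = (\<Prod>x\<in>S. AV (\<tau> x)) * (\<Prod>e\<in>ES. AE (\<tau> (fst e)) (\<tau> (snd e)))" for \<tau> :: "nat \<Rightarrow> nat"
  define R where "R \<tau> = (\<Prod>x\<in>V-\<Lambda>-S. AV (\<tau> x)) * (\<Prod>e\<in>E-ES. h \<tau> e)" for \<tau> :: "nat \<Rightarrow> nat"
  define F where "F \<tau> = (SOME \<tau>''. \<tau>'' \<in> C \<and> wcond V E AE AV (V-U) (restrict (\<tau>(v:=c)) (V-U)) \<tau>'' > 0)" for \<tau> :: "nat \<Rightarrow> nat"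
  have finV: "finite V" and EV: "E \<subseteq> V \<times> V" and noloop: "\<And>a b. (a,b) \<in> E \<Longrightarrow> a \<noteq> b"
    using sg unfolding simple_graph_def by auto
  have finE: "finite E" using finV EV finite_subset by blast
  have UV: "U \<subseteq> V" unfolding U_def by auto
  have vU: "v \<notin> U" unfolding U_def using noloop by auto
  have SV: "S \<subseteq> V - \<Lambda>" unfolding S_def U_def using vV by auto
  have finS: "finite S" using SV finV finite_subset by blast
  have finU: "finite U" using UV finV finite_subset by blast
  have Cfin: "finite C" unfolding C_def configs_def using finV by (simp add: finite_PiE)
  have inC: "\<tau> x < q" if "\<tau> \<in> C" "x \<in> V" for \<tau> x using that unfolding C_def configs_def by auto
  have w_def2: "w \<tau> = (if (\<forall>x\<in>\<Lambda>. \<tau> x = \<sigma> x) then (\<Prod>x\<in>V - \<Lambda>. AV (\<tau> x)) * (\<Prod>e\<in>E. h \<tau> e) else 0)" for \<tau>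
    unfolding w_def wcond_def h_def by simp
  have hnn: "h \<tau> e \<ge> 0" if "\<tau> \<in> C" "e \<in> E" for \<tau> e
    using that EV inC AEnn unfolding h_def by (cases e) auto
  have wnn: "w \<tau> \<ge> 0" if "\<tau> \<in> C" for \<tau>
    unfolding w_def2 using that hnn inC AVnn
    by (auto intro!: mult_nonneg_nonneg prod_nonneg)
  have cardU: "card U \<le> \<Delta>"
  proof -
    have "U \<subseteq> {u. (u, v) \<in> E \<or> (v, u) \<in> E}" unfolding U_def by auto
    moreover have "finite {u. (u, v) \<in> E \<or> (v, u) \<in> E}"
      by (rule finite_subset[OF _ finV]) (use EV in auto)
    ultimately have "card U \<le> degree E v" unfolding degree_def by (simp add: card_mono)
    also have "\<dots> \<le> \<Delta>" using md vV unfolding max_degree_le_def by auto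
    finally show ?thesis .
  qed
  have cardS: "card S \<le> \<Delta> + 1" unfolding S_def using cardU finU vU by simp
  have cardES: "card ES \<le> 2*\<Delta>*(\<Delta>+1)"
  proof -
    define N where "N s = {u. (u, s) \<in> E \<or> (s, u) \<in> E}" for s
    have finN: "finite (N s)" for s
      unfolding N_def by (rule finite_subset[OF _ finV]) (use EV in auto)
    have "ES \<subseteq> (\<Union>s\<in>S. ({s} \<times> N s) \<union> (N s \<times> {s}))"
      unfolding ES_def N_def by auto
    hence "card ES \<le> card (\<Union>s\<in>S. ({s} \<times> N s) \<union> (N s \<times> {s}))"
      by (intro card_mono) (auto simp: finS finN)
    also have "\<dots> \<le> (\<Sum>s\<in>S. card (({s} \<times> N s) \<union> (N s \<times> {s})))"
      using finS by (rule card_UN_le)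
    also have "\<dots> \<le> (\<Sum>s\<in>S. 2 * \<Delta>)"
    proof (rule sum_mono)
      fix s assume sS: "s \<in> S"
      have "card (({s} \<times> N s) \<union> (N s \<times> {s})) \<le> card ({s} \<times> N s) + card (N s \<times> {s})"
        by (rule card_Un_le)
      also have "\<dots> = 2 * card (N s)" by (simp add: card_cartesian_product)
      also have "card (N s) \<le> \<Delta>" using md sS SV unfolding max_degree_le_def degree_def N_def by auto
      finally show "card (({s} \<times> N s) \<union> (N s \<times> {s})) \<le> 2 * \<Delta>" by simp
    qed
    also have "\<dots> = card S * (2*\<Delta>)" by simp
    also have "\<dots> \<le> (\<Delta>+1) * (2*\<Delta>)" using cardS by (rule mult_right_mono) simp
    finally show ?thesis by (simp add: algebra_simps)
  qed
  have decomp: "w \<tau> = PS \<tau> * R \<tau>" if "\<forall>x\<in>\<Lambda>. \<tau> x = \<sigma> x" for \<tau>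
  proof -
    have "(\<Prod>x\<in>V - \<Lambda>. AV (\<tau> x)) = (\<Prod>x\<in>S. AV (\<tau> x)) * (\<Prod>x\<in>V-\<Lambda>-S. AV (\<tau> x))"
      using prod.subset_diff[OF SV] finV by (simp add: mult.commute)
    moreover have "(\<Prod>e\<in>E. h \<tau> e) = (\<Prod>e\<in>ES. h \<tau> e) * (\<Prod>e\<in>E-ES. h \<tau> e)"
      using prod.subset_diff[of ES E] finE unfolding ES_def by (simp add: mult.commute)
    moreover have "(\<Prod>e\<in>ES. h \<tau> e) = (\<Prod>e\<in>ES. AE (\<tau> (fst e)) (\<tau> (snd e)))"
      by (rule prod.cong) (use SV in \<open>auto simp: h_def ES_def\<close>)
    ultimately show ?thesis unfolding w_def2 PS_def R_def using that by (simp add: algebra_simps)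
  qed
  obtain \<tau>0 where t0A: "\<tau>0 \<in> A" and t0w: "w \<tau>0 \<noteq> 0"
  proof -
    have "(\<Sum>\<tau>\<in>A. w \<tau>) \<noteq> 0" using mpos unfolding marginal_def A_def C_def w_def by auto
    then show ?thesis using that by (meson sum.neutral)
  qed
  have t0L: "\<forall>x\<in>\<Lambda>. \<tau>0 x = \<sigma> x" using t0w unfolding w_def2 by (auto split: if_splits)
  have t0v: "\<tau>0 v = c" using t0A unfolding A_def by auto
  have t0AV: "AV c \<noteq> 0"
    using t0w t0L vV finV t0v unfolding w_def2 by auto
  have t0h: "h \<tau>0 e \<noteq> 0" if "e \<in> E" for e
    using t0w t0L finE that unfolding w_def2 by auto
  have Fex: "F \<tau> \<in> C \<and> wcond V E AE AV (V-U) (restrict (\<tau>(v:=c)) (V-U)) (F \<tau>) > 0" if "\<tau> \<in> C" for \<tau>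
  proof -
    let ?\<rho> = "restrict (\<tau>(v:=c)) (V-U)"
    have "?\<rho> \<in> configs q (V-U)" using that cq inC unfolding configs_def by auto
    hence Zp: "Zcond q V E AE AV (V-U) ?\<rho> > 0" using perm unfolding permissive_def by auto
    have "\<exists>\<tau>''. \<tau>'' \<in> C \<and> wcond V E AE AV (V-U) ?\<rho> \<tau>'' > 0"
    proof (rule ccontr)
      assume "\<not> ?thesis"
      hence "\<forall>\<tau>''\<in>C. wcond V E AE AV (V-U) ?\<rho> \<tau>'' \<le> 0" by auto
      hence "Zcond q V E AE AV (V-U) ?\<rho> \<le> 0" unfolding Zcond_def C_def[symmetric] by (intro sum_nonpos) auto
      with Zp show False by simp
    qed
    then show ?thesis unfolding F_def by (rule someI_ex)
  qed
  have FC: "F \<tau> \<in> C" if "\<tau> \<in> C" for \<tau> using Fex[OF that] by auto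
  have Fagree: "F \<tau> x = (\<tau>(v:=c)) x" if "\<tau> \<in> C" "x \<in> V - U" for \<tau> x
    using Fex[OF that(1)] that(2) unfolding wcond_def by (auto split: if_splits)
  have Fprods: "(\<Prod>x\<in>V - (V-U). AV (F \<tau> x)) * (\<Prod>e\<in>E. if fst e \<in> V-U \<and> snd e \<in> V-U then 1 else AE (F \<tau> (fst e)) (F \<tau> (snd e))) \<noteq> 0" if "\<tau> \<in> C" for \<tau>
    using Fex[OF that(1)] unfolding wcond_def by (auto split: if_splits)
  have FAVU: "AV (F \<tau> x) \<noteq> 0" if "\<tau> \<in> C" "x \<in> U" for \<tau> x
    using Fprods[OF that(1)] that(2) finU UV by (auto simp: Diff_Diff_Int Int_absorb1)
  have FAEU: "AE (F \<tau> (fst e)) (F \<tau> (snd e)) \<noteq> 0" if "\<tau> \<in> C" "e \<in> E" "fst e \<in> U \<or> snd e \<in> U" for \<tau> e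
    using Fprods[OF that(1)] that(2,3) finE by auto
  have FA: "F \<tau> \<in> A" if "\<tau> \<in> C" for \<tau> using FC[OF that] Fagree[OF that, of v] vV vU unfolding A_def by auto
  have Sfac: "\<tau> x < q" if "\<tau> \<in> C" "x \<in> S" for \<tau> x using inC[OF that(1)] that(2) SV by auto
  have ESfac: "\<tau> (fst e) < q \<and> \<tau> (snd e) < q" if "\<tau> \<in> C" "e \<in> ES" for \<tau> e
    using that EV inC unfolding ES_def by (cases e) auto
  have PSup: "PS \<tau> \<le> M ^ K" if "\<tau> \<in> C" for \<tau>
  proof -
    have "(\<Prod>x\<in>S. AV (\<tau> x)) \<le> (\<Prod>x\<in>S. M)"
      by (rule prod_mono) (use Sfac[OF that] AVnn AVM in auto)
    moreover have "(\<Prod>e\<in>ES. AE (\<tau> (fst e)) (\<tau> (snd e))) \<le> (\<Prod>e\<in>ES. M)"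
      by (rule prod_mono) (use ESfac[OF that] AEnn AEM in auto)
    moreover have "0 \<le> (\<Prod>e\<in>ES. AE (\<tau> (fst e)) (\<tau> (snd e)))"
      by (rule prod_nonneg) (use ESfac[OF that] AEnn in auto)
    moreover have "0 \<le> M" using M1 by simp
    ultimately have "PS \<tau> \<le> M ^ card S * M ^ card ES" unfolding PS_def
      by (simp add: mult_mono)
    also have "\<dots> \<le> M ^ (\<Delta>+1) * M ^ (2*\<Delta>*(\<Delta>+1))"
      by (intro mult_mono power_increasing cardS cardES M1) (use M1 in auto)
    also have "\<dots> = M ^ K" unfolding K_def by (rule power_add[symmetric])
    finally show ?thesis .
  qed
  have PSlow: "m ^ K \<le> PS (F \<tau>)" if tC: "\<tau> \<in> C" and tL: "\<forall>x\<in>\<Lambda>. \<tau> x = \<sigma> x" for \<tau>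
  proof -
    have FtC: "F \<tau> \<in> C" using FC[OF tC] .
    have "m ^ K = m ^ (\<Delta>+1) * m ^ (2*\<Delta>*(\<Delta>+1))" unfolding K_def by (rule power_add)
    also have "\<dots> \<le> m ^ card S * m ^ card ES"
      by (intro mult_mono power_decreasing cardS cardES m1) (use m0 in auto)
    also have "\<dots> \<le> PS (F \<tau>)" unfolding PS_def
    proof (intro mult_mono)
      show "m ^ card S \<le> (\<Prod>x\<in>S. AV (F \<tau> x))"
      proof -
        have "(\<Prod>x\<in>S. m) \<le> (\<Prod>x\<in>S. AV (F \<tau> x))"
        proof (rule prod_mono, safe)
          fix x assume xS: "x \<in> S"
          have "AV (F \<tau> x) \<noteq> 0"
          proof (cases "x = v")
            case True
            then show ?thesis using Fagree[OF tC, of v] vV vU t0AV by simp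
          next
            case False
            then show ?thesis using FAVU[OF tC] xS unfolding S_def by auto
          qed
          then show "m \<le> AV (F \<tau> x)" using AVm Sfac[OF FtC xS] by auto
        qed (use m0 in auto)
        then show ?thesis by simp
      qed
      show "m ^ card ES \<le> (\<Prod>e\<in>ES. AE (F \<tau> (fst e)) (F \<tau> (snd e)))"
      proof -
        have "(\<Prod>x\<in>ES. m) \<le> (\<Prod>e\<in>ES. AE (F \<tau> (fst e)) (F \<tau> (snd e)))"
        proof (rule prod_mono, safe)
          fix a b assume eES: "(a,b) \<in> ES"
          have eE: "(a,b) \<in> E" using eES unfolding ES_def by auto
          have "AE (F \<tau> a) (F \<tau> b) \<noteq> 0"
          proof (cases "a \<in> U \<or> b \<in> U")
            case True
            then show ?thesis using FAEU[OF tC eE] by auto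
          next
            case False
            have abV: "a \<in> V" "b \<in> V" using eE EV by auto
            have "a = v \<or> b = v" using eES False unfolding ES_def S_def by auto
            then show ?thesis
            proof
              assume av: "a = v"
              have bv: "b \<noteq> v" using noloop eE av by auto
              have bL: "b \<in> \<Lambda>" using False abV eE av unfolding U_def by auto
              have "F \<tau> a = \<tau>0 a" using Fagree[OF tC, of v] vV vU av t0v by simp
              moreover have "F \<tau> b = \<tau>0 b" using Fagree[OF tC, of b] bL abV bv tL t0L unfolding U_def by auto
              moreover have "h \<tau>0 (a,b) = AE (\<tau>0 a) (\<tau>0 b)" unfolding h_def using av vV by auto
              ultimately show ?thesis using t0h[OF eE] by simp
            next
              assume bv: "b = v"
              have av: "a \<noteq> v" using noloop eE bv by auto
              have aL: "a \<in> \<Lambda>" using False abV eE bv unfolding U_def by auto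
              have "F \<tau> b = \<tau>0 b" using Fagree[OF tC, of v] vV vU bv t0v by simp
              moreover have "F \<tau> a = \<tau>0 a" using Fagree[OF tC, of a] aL abV av tL t0L unfolding U_def by auto
              moreover have "h \<tau>0 (a,b) = AE (\<tau>0 a) (\<tau>0 b)" unfolding h_def using bv vV by auto
              ultimately show ?thesis using t0h[OF eE] by simp
            qed
          qed
          then show "m \<le> AE (F \<tau> (fst (a,b))) (F \<tau> (snd (a,b)))" using AEm ESfac[OF FtC eES] by auto
        qed (use m0 in auto)
        then show ?thesis by simp
      qed
    qed (use m0 Sfac[OF FtC] AVnn in \<open>auto intro!: prod_nonneg\<close>)
    finally show ?thesis .
  qed
  have Rnn: "R \<tau> \<ge> 0" if "\<tau> \<in> C" for \<tau>
    unfolding R_def using that hnn inC AVnn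
    by (auto intro!: mult_nonneg_nonneg prod_nonneg)
  have Req: "R (F \<tau>) = R \<tau>" if tC: "\<tau> \<in> C" for \<tau>
  proof -
    have "(\<Prod>x\<in>V-\<Lambda>-S. AV (F \<tau> x)) = (\<Prod>x\<in>V-\<Lambda>-S. AV (\<tau> x))"
      by (rule prod.cong) (use Fagree[OF tC] in \<open>auto simp: S_def\<close>)
    moreover have "(\<Prod>e\<in>E-ES. h (F \<tau>) e) = (\<Prod>e\<in>E-ES. h \<tau> e)"
    proof (rule prod.cong)
      fix e assume "e \<in> E - ES"
      then have "fst e \<in> V - U" "snd e \<in> V - U" "fst e \<noteq> v" "snd e \<noteq> v"
        using EV unfolding ES_def S_def by auto
      then show "h (F \<tau>) e = h \<tau> e" unfolding h_def using Fagree[OF tC] by auto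
    qed simp
    ultimately show ?thesis unfolding R_def by simp
  qed
  have FL: "\<forall>x\<in>\<Lambda>. F \<tau> x = \<sigma> x" if tC: "\<tau> \<in> C" and tL: "\<forall>x\<in>\<Lambda>. \<tau> x = \<sigma> x" for \<tau>
    using Fagree[OF tC] tL LV vV unfolding U_def by auto
  define r where "r = M ^ K / m ^ K"
  have mK: "m ^ K > 0" using m0 by simp
  have point: "w \<tau> \<le> r * w (F \<tau>)" if tC: "\<tau> \<in> C" for \<tau>
  proof (cases "\<forall>x\<in>\<Lambda>. \<tau> x = \<sigma> x")
    case True
    have "w \<tau> = PS \<tau> * R \<tau>" using decomp True by simp
    also have "\<dots> \<le> M ^ K * R \<tau>" using PSup[OF tC] Rnn[OF tC] by (rule mult_right_mono)
    also have "\<dots> = r * (m ^ K * R \<tau>)" unfolding r_def using m0 by (simp add: field_simps)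
    also have "\<dots> \<le> r * (PS (F \<tau>) * R \<tau>)"
      using PSlow[OF tC True] Rnn[OF tC] mK M1 unfolding r_def
      by (intro mult_left_mono mult_right_mono) auto
    also have "\<dots> = r * w (F \<tau>)" using decomp[OF FL[OF tC True]] Req[OF tC] by simp
    finally show ?thesis .
  next
    case False
    then have "w \<tau> = 0" unfolding w_def2 by auto
    moreover have "r \<ge> 0" unfolding r_def using mK M1 by simp
    ultimately show ?thesis using wnn[OF FC[OF tC]] by simp
  qed
  have fib: "card {\<tau>\<in>C. F \<tau> = \<tau>'} \<le> (q+1)^(\<Delta>+1)" for \<tau>'
  proof -
    have "card {\<tau>\<in>C. F \<tau> = \<tau>'} \<le> card (configs q S)"
    proof (rule card_inj_on_le)
      show "inj_on (\<lambda>\<tau>. restrict \<tau> S) {\<tau>\<in>C. F \<tau> = \<tau>'}"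
      proof (rule inj_onI)
        fix \<tau>1 \<tau>2 assume t1: "\<tau>1 \<in> {\<tau>\<in>C. F \<tau> = \<tau>'}" and t2: "\<tau>2 \<in> {\<tau>\<in>C. F \<tau> = \<tau>'}"
          and eq: "restrict \<tau>1 S = restrict \<tau>2 S"
        show "\<tau>1 = \<tau>2"
        proof
          fix x
          show "\<tau>1 x = \<tau>2 x"
          proof (cases "x \<in> V")
            case False
            then show ?thesis using t1 t2 unfolding C_def configs_def by (auto simp: PiE_def extensional_def)
          next
            case True
            show ?thesis
            proof (cases "x \<in> S")
              case True
              then show ?thesis using eq by (metis restrict_apply')
            next
              case False
              then have "x \<in> V - U" "x \<noteq> v" using \<open>x \<in> V\<close> unfolding S_def by auto
              then show ?thesis using Fagree[of \<tau>1 x] Fagree[of \<tau>2 x] t1 t2 by auto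
            qed
          qed
        qed
      qed
      show "(\<lambda>\<tau>. restrict \<tau> S) ` {\<tau>\<in>C. F \<tau> = \<tau>'} \<subseteq> configs q S"
        using Sfac unfolding configs_def by auto
      show "finite (configs q S)" unfolding configs_def using finS by (simp add: finite_PiE)
    qed
    also have "card (configs q S) = q ^ card S" unfolding configs_def using finS by (simp add: card_PiE)
    also have "\<dots> \<le> (q+1) ^ card S" by (simp add: power_mono)
    also have "\<dots> \<le> (q+1) ^ (\<Delta>+1)" using cardS by (intro power_increasing) auto
    finally show ?thesis .
  qed
  have "Zcond q V E AE AV \<Lambda> \<sigma> = (\<Sum>\<tau>\<in>C. w \<tau>)" unfolding Zcond_def C_def w_def ..
  also have "\<dots> \<le> (\<Sum>\<tau>\<in>C. r * w (F \<tau>))" by (rule sum_mono) (rule point)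
  also have "\<dots> = (\<Sum>y\<in>F ` C. (\<Sum>\<tau>\<in>{\<tau>\<in>C. F \<tau> = y}. r * w (F \<tau>)))"
    using Cfin by (rule sum.image_gen)
  also have "\<dots> = (\<Sum>y\<in>F ` C. real (card {\<tau>\<in>C. F \<tau> = y}) * (r * w y))"
    by (rule sum.cong) auto
  also have "\<dots> \<le> (\<Sum>y\<in>F ` C. real ((q+1)^(\<Delta>+1)) * (r * w y))"
  proof (rule sum_mono)
    fix y assume "y \<in> F ` C"
    then have "w y \<ge> 0" using wnn FC by auto
    moreover have "r \<ge> 0" unfolding r_def using mK M1 by simp
    ultimately show "real (card {\<tau>\<in>C. F \<tau> = y}) * (r * w y) \<le> real ((q+1)^(\<Delta>+1)) * (r * w y)"
      using fib[of y] by (intro mult_right_mono) (simp_all only: of_nat_le_iff mult_nonneg_nonneg)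
  qed
  also have "\<dots> = r * real ((q+1)^(\<Delta>+1)) * (\<Sum>y\<in>F ` C. w y)"
    unfolding sum_distrib_left[symmetric] by (simp only: mult_ac)
  also have "\<dots> \<le> r * real ((q+1)^(\<Delta>+1)) * (\<Sum>y\<in>A. w y)"
  proof (rule mult_left_mono)
    show "(\<Sum>y\<in>F ` C. w y) \<le> (\<Sum>y\<in>A. w y)"
      by (rule sum_mono2) (use Cfin FA wnn in \<open>auto simp: A_def\<close>)
    show "0 \<le> r * real ((q+1)^(\<Delta>+1))" unfolding r_def using mK M1 by simp
  qed
  finally show ?thesis unfolding r_def K_def A_def C_def w_def .
qed

theorem mainTheorem4:
  fixes q \<Delta> :: nat and AE :: "nat \<Rightarrow> nat \<Rightarrow> real" and AV :: "nat \<Rightarrow> real"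
  assumes "\<forall>i<q. \<forall>j<q. AE i j \<ge> 0"
    and "\<forall>i<q. AV i \<ge> 0"
  shows "\<exists>b>0. \<forall>V E. simple_graph V E \<longrightarrow> max_degree_le V E \<Delta> \<longrightarrow>
           permissive q V E AE AV \<longrightarrow> marginally_bounded b q V E AE AV"
proof -
  define Vals where "Vals = (\<lambda>(i,j). AE i j) ` ({..<q}\<times>{..<q}) \<union> AV ` {..<q}"
  define m where "m = Min (insert 1 {x\<in>Vals. 0<x})"
  define M where "M = Max (insert 1 Vals)"
  define K where "K = (\<Delta>+1) + 2*\<Delta>*(\<Delta>+1)"
  define r where "r = M ^ K / m ^ K * real ((q+1)^(\<Delta>+1))"
  have finVals: "finite Vals" unfolding Vals_def by simp
  have m0: "0 < m" unfolding m_def using finVals by (subst Min_gr_iff) auto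
  have m1: "m \<le> 1" unfolding m_def using finVals by (intro Min_le) auto
  have M1: "1 \<le> M" unfolding M_def using finVals by (intro Max_ge) auto
  have AEin: "AE i j \<in> Vals" if "i<q" "j<q" for i j unfolding Vals_def using that by force
  have AVin: "AV i \<in> Vals" if "i<q" for i unfolding Vals_def using that by force
  have mle: "m \<le> x" if "x \<in> Vals" "x \<noteq> 0" "x \<ge> 0" for x
    unfolding m_def using finVals that by (intro Min_le) auto
  have Mge: "x \<le> M" if "x \<in> Vals" for x
    unfolding M_def using finVals that by (intro Max_ge) auto
  have AEm: "\<forall>i<q. \<forall>j<q. AE i j \<noteq> 0 \<longrightarrow> m \<le> AE i j" using mle AEin assms(1) by auto
  have AVm: "\<forall>i<q. AV i \<noteq> 0 \<longrightarrow> m \<le> AV i" using mle AVin assms(2) by auto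
  have AEM: "\<forall>i<q. \<forall>j<q. AE i j \<le> M" using Mge AEin by auto
  have AVM: "\<forall>i<q. AV i \<le> M" using Mge AVin by auto
  have qp: "(0::real) < real ((q+1)^(\<Delta>+1))" by (simp only: of_nat_0_less_iff) simp
  have rpos: "r > 0" unfolding r_def using m0 M1 qp by (intro mult_pos_pos divide_pos_pos zero_less_power) auto
  show ?thesis
  proof (intro exI[of _ "1 / r"] conjI allI impI)
    show "1 / r > 0" using rpos by simp
    fix V E assume sg: "simple_graph V E" and md: "max_degree_le V E \<Delta>" and perm: "permissive q V E AE AV"
    show "marginally_bounded (1 / r) q V E AE AV"
      unfolding marginally_bounded_def
    proof (intro allI impI)
      fix \<Lambda> \<sigma> v c assume LV: "\<Lambda> \<subseteq> V" and sig: "\<sigma> \<in> configs q \<Lambda>" and vV: "v \<in> V - \<Lambda>"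
        and cq: "c < q" and mpos: "marginal q V E AE AV \<Lambda> \<sigma> v c > 0"
      have Zle: "Zcond q V E AE AV \<Lambda> \<sigma> \<le> r * (\<Sum>\<tau>\<in>{\<tau>\<in>configs q V. \<tau> v = c}. wcond V E AE AV \<Lambda> \<sigma> \<tau>)"
        using key[OF assms AEm AVm AEM AVM m0 m1 M1 sg md perm LV sig vV cq mpos]
        unfolding r_def K_def .
      have Zp: "Zcond q V E AE AV \<Lambda> \<sigma> > 0" using perm LV sig unfolding permissive_def by auto
      show "1 / r \<le> marginal q V E AE AV \<Lambda> \<sigma> v c"
        unfolding marginal_def using Zle Zp rpos by (simp add: field_simps)
    qed
  qed
qed

end
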